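(* Let $(G,S,C,\phi_0)$ be a minimal counterexample, and let $f=[uvw]$ be a $3$-face of $G$ with $d(u)=d(w)=3$ and $u,w\notin S$. Then every edge $e$ of $f$ is full, i.e., $C_e$ is a perfect matching.
   Context: All graphs are finite and simple. Two cycles are adjacent if they share at least one common edge. A $3$-correspondence assignment for $G$ consists of the list $L(u)=\{1,2,3\}$ for each vertex together with, for each edge $e=uv$, a matching $C_e$ (not necessarily perfect) between $\{u\}\times\{1,2,3\}$ and $\{v\}\times\{1,2,3\}$. A $C$-coloring is a map $\phi$ to $\{1,2,3\}$ with $(u,\phi(u))(v,\phi(v))\notin E(C_{uv})$ for every edge $uv$. For a closed walk $v_1\dots v_m$ ($v_m=v_1$), $C$ is inconsistent on it if there are colors $c_i$ with $(v_i,c_i)(v_{i+1},c_{i+1})\in E(C_{v_iv_{i+1}})$ for all $i\in[m-1]$ and $c_1\ne c_m$. A counterexample is a quadruple $(G,S,C,\phi_0)$ where $G$ is a plane graph with no two adjacent cycles of length at most $8$, $S\subseteq V(G)$ with $|S|\le 12$ is either a single vertex or the vertex set of the boundary of a face, $C$ is a $3$-correspondence assignment consistent on every closed walk of length $3$, and $\phi_0$ is a $C$-coloring of $G[S]$ that does not extend to a $C$-coloring of $G$. A minimal counterexample is a counterexample minimizing $|V(G)|$, subject to that minimizing $|E(G)|-|E(G[S])|$, and subject to both maximizing $\sum_{uv\in E(G)}|E(C_{uv})|$. A $k$-face is a face whose boundary has $k$ vertices; $[v_1\dots v_k]$ denotes the face with boundary vertices in this cyclic order. *)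

theory Defs
  imports "HOL-Analysis.Analysis"
begin

record pgraph =
  pV :: "nat set"
  pE :: "nat set set"
  pos :: "nat \<Rightarrow> complex"
  parc :: "nat set \<Rightarrow> real \<Rightarrow> complex"

definition plane_graph :: "pgraph \<Rightarrow> bool" where
  "plane_graph G \<longleftrightarrow>
     finite (pV G) \<and>
     (\<forall>e\<in>pE G. \<exists>u v. e = {u, v} \<and> u \<noteq> v \<and> u \<in> pV G \<and> v \<in> pV G) \<and>
     inj_on (pos G) (pV G) \<and>
     (\<forall>e\<in>pE G. arc (parc G e) \<and>
        (\<exists>u v. e = {u, v} \<and> pathstart (parc G e) = pos G u \<and> pathfinish (parc G e) = pos G v)) \<and>
     (\<forall>e\<in>pE G. \<forall>v\<in>pV G. pos G v \<in> path_image (parc G e) \<longrightarrow> v \<in> e) \<and>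
     (\<forall>e\<in>pE G. \<forall>e'\<in>pE G. e \<noteq> e' \<longrightarrow>
        path_image (parc G e) \<inter> path_image (parc G e') \<subseteq> pos G ` (e \<inter> e'))"

definition drawing :: "pgraph \<Rightarrow> complex set" where
  "drawing G = pos G ` pV G \<union> (\<Union>e\<in>pE G. path_image (parc G e))"

definition is_face :: "pgraph \<Rightarrow> complex set \<Rightarrow> bool" where
  "is_face G F \<longleftrightarrow> (\<exists>x. x \<notin> drawing G \<and> F = connected_component_set (- drawing G) x)"

definition face_vertices :: "pgraph \<Rightarrow> complex set \<Rightarrow> nat set" where
  "face_vertices G F = {v\<in>pV G. pos G v \<in> frontier F}"

definition face_edges :: "pgraph \<Rightarrow> complex set \<Rightarrow> nat set set" where
  "face_edges G F = {e\<in>pE G. path_image (parc G e) \<subseteq> frontier F}"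

definition degree :: "pgraph \<Rightarrow> nat \<Rightarrow> nat" where
  "degree G u = card {v. {u, v} \<in> pE G}"

definition is_cycle :: "pgraph \<Rightarrow> nat list \<Rightarrow> bool" where
  "is_cycle G xs \<longleftrightarrow> length xs \<ge> 3 \<and> distinct xs \<and> set xs \<subseteq> pV G \<and>
     (\<forall>i < length xs. {xs ! i, xs ! ((i + 1) mod length xs)} \<in> pE G)"

definition cycle_edges :: "nat list \<Rightarrow> nat set set" where
  "cycle_edges xs = {{xs ! i, xs ! ((i + 1) mod length xs)} | i. i < length xs}"

definition no_adjacent_short_cycles :: "pgraph \<Rightarrow> bool" where
  "no_adjacent_short_cycles G \<longleftrightarrow>
     (\<forall>xs ys. is_cycle G xs \<and> is_cycle G ys \<and> length xs \<le> 8 \<and> length ys \<le> 8 \<and>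
        cycle_edges xs \<noteq> cycle_edges ys \<longrightarrow> cycle_edges xs \<inter> cycle_edges ys = {})"

text \<open>C u v is the set of pairs (c,d) such that (u,c)(v,d) is an edge of the matching C_uv.\<close>
definition corr3 :: "pgraph \<Rightarrow> (nat \<Rightarrow> nat \<Rightarrow> (nat \<times> nat) set) \<Rightarrow> bool" where
  "corr3 G C \<longleftrightarrow>
     (\<forall>u v. {u, v} \<in> pE G \<longrightarrow>
        C u v \<subseteq> {1,2,3} \<times> {1,2,3} \<and> C v u = converse (C u v) \<and>
        (\<forall>a b b'. (a, b) \<in> C u v \<and> (a, b') \<in> C u v \<longrightarrow> b = b') \<and>
        (\<forall>a a' b. (a, b) \<in> C u v \<and> (a', b) \<in> C u v \<longrightarrow> a = a')) \<and>
     (\<forall>u v. {u, v} \<notin> pE G \<longrightarrow> C u v = {})"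

definition perfect_matching3 :: "(nat \<times> nat) set \<Rightarrow> bool" where
  "perfect_matching3 M \<longleftrightarrow>
     (\<forall>a\<in>{1,2,3}. \<exists>b. (a, b) \<in> M) \<and> (\<forall>b\<in>{1,2,3}. \<exists>a. (a, b) \<in> M)"

definition C_coloring :: "pgraph \<Rightarrow> (nat \<Rightarrow> nat \<Rightarrow> (nat \<times> nat) set) \<Rightarrow> nat set \<Rightarrow> (nat \<Rightarrow> nat) \<Rightarrow> bool" where
  "C_coloring G C X phi \<longleftrightarrow>
     (\<forall>v\<in>X. phi v \<in> {1,2,3}) \<and>
     (\<forall>u\<in>X. \<forall>v\<in>X. {u, v} \<in> pE G \<longrightarrow> (phi u, phi v) \<notin> C u v)"

definition closed_walk :: "pgraph \<Rightarrow> nat list \<Rightarrow> bool" where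
  "closed_walk G ws \<longleftrightarrow> length ws \<ge> 2 \<and> hd ws = last ws \<and>
     (\<forall>i < length ws - 1. {ws ! i, ws ! (i + 1)} \<in> pE G)"

definition inconsistent_on :: "(nat \<Rightarrow> nat \<Rightarrow> (nat \<times> nat) set) \<Rightarrow> nat list \<Rightarrow> bool" where
  "inconsistent_on C ws \<longleftrightarrow>
     (\<exists>cs. length cs = length ws \<and>
        (\<forall>i < length ws - 1. (cs ! i, cs ! (i + 1)) \<in> C (ws ! i) (ws ! (i + 1))) \<and>
        hd cs \<noteq> last cs)"

definition counterexample ::
  "pgraph \<Rightarrow> nat set \<Rightarrow> (nat \<Rightarrow> nat \<Rightarrow> (nat \<times> nat) set) \<Rightarrow> (nat \<Rightarrow> nat) \<Rightarrow> bool" where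
  "counterexample G S C phi0 \<longleftrightarrow>
     plane_graph G \<and> no_adjacent_short_cycles G \<and>
     S \<subseteq> pV G \<and> card S \<le> 12 \<and>
     ((\<exists>v\<in>pV G. S = {v}) \<or> (\<exists>F. is_face G F \<and> S = face_vertices G F)) \<and>
     corr3 G C \<and>
     (\<forall>ws. closed_walk G ws \<and> length ws = 4 \<longrightarrow> \<not> inconsistent_on C ws) \<and>
     C_coloring G C S phi0 \<and>
     \<not> (\<exists>phi. C_coloring G C (pV G) phi \<and> (\<forall>v\<in>S. phi v = phi0 v))"

definition excess_edges :: "pgraph \<Rightarrow> nat set \<Rightarrow> nat" where
  "excess_edges G S = card (pE G) - card {e\<in>pE G. e \<subseteq> S}"

text \<open>sum over the edges uv of |E(C_uv)| (each edge counted once, via u < v).\<close>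
definition corr_weight :: "pgraph \<Rightarrow> (nat \<Rightarrow> nat \<Rightarrow> (nat \<times> nat) set) \<Rightarrow> nat" where
  "corr_weight G C = (\<Sum>p\<in>{(u, v). {u, v} \<in> pE G \<and> u < v}. card (C (fst p) (snd p)))"

definition minimal_counterexample ::
  "pgraph \<Rightarrow> nat set \<Rightarrow> (nat \<Rightarrow> nat \<Rightarrow> (nat \<times> nat) set) \<Rightarrow> (nat \<Rightarrow> nat) \<Rightarrow> bool" where
  "minimal_counterexample G S C phi0 \<longleftrightarrow>
     counterexample G S C phi0 \<and>
     (\<forall>G' S' C' phi0'. counterexample G' S' C' phi0' \<longrightarrow>
        \<not> (card (pV G') < card (pV G) \<or>
           (card (pV G') = card (pV G) \<and>
             (excess_edges G' S' < excess_edges G S \<or>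
              (excess_edges G' S' = excess_edges G S \<and> corr_weight G' C' > corr_weight G C)))))"

end

theory Submission
  imports Defs
begin


lemma edge_ends:
  assumes "plane_graph G" "{a,b} \<in> pE G"
  shows "a \<noteq> b \<and> a \<in> pV G \<and> b \<in> pV G"
proof -
  note E = conjunct1[OF conjunct2[OF assms(1)[unfolded plane_graph_def]]]
  from E assms(2) obtain x y where "{a,b} = {x,y}" "x \<noteq> y" "x \<in> pV G" "y \<in> pV G"
    by blast
  then show ?thesis by (auto simp: doubleton_eq_iff)
qed

lemma cycle_edges3: "cycle_edges [a,b,c] = {{a,b},{b,c},{c,a}}"
proof -
  have e: "{i. i < (3::nat)} = {0,1,2}" by auto
  have "cycle_edges [a,b,c] = (\<lambda>i. {[a,b,c] ! i, [a,b,c] ! ((i + 1) mod 3)}) ` {i. i < 3}"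
    unfolding cycle_edges_def by auto
  also have "\<dots> = {{a,b},{b,c},{c,a}}" unfolding e by simp
  finally show ?thesis .
qed

lemma all3: "(\<forall>i<(3::nat). P i) = (P 0 \<and> P 1 \<and> P 2)"
  by (auto simp: eval_nat_numeral less_Suc_eq)

lemma is_cycle3:
  assumes "plane_graph G" "distinct [a,b,c]" "{a,b} \<in> pE G" "{b,c} \<in> pE G" "{c,a} \<in> pE G"
  shows "is_cycle G [a,b,c]"
proof -
  have l: "length [a,b,c] = 3" by simp
  show ?thesis using assms edge_ends[OF assms(1) assms(3)] edge_ends[OF assms(1) assms(4)]
    unfolding is_cycle_def l all3 by (simp add: insert_commute)
qed




lemma third_vertex:
  assumes "plane_graph G" "no_adjacent_short_cycles G" "distinct [a,b,c]"
    "{a,b} \<in> pE G" "{b,c} \<in> pE G" "{c,a} \<in> pE G"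
    "{b,z} \<in> pE G" "{z,a} \<in> pE G" "z \<noteq> a" "z \<noteq> b"
  shows "z = c"
proof (rule ccontr)
  assume zc: "z \<noteq> c"
  have c1: "is_cycle G [a,b,c]" using is_cycle3 assms by blast
  have d2: "distinct [a,b,z]" using assms(3,9,10) by simp
  have c2: "is_cycle G [a,b,z]" using is_cycle3[OF assms(1) d2 assms(4,7,8)] .
  have m1: "{b,z} \<in> cycle_edges [a,b,z]" unfolding cycle_edges3 by simp
  have m2: "{b,z} \<notin> cycle_edges [a,b,c]"
  proof
    assume "{b,z} \<in> cycle_edges [a,b,c]"
    then have "{b,z} = {a,b} \<or> {b,z} = {b,c} \<or> {b,z} = {c,a}" unfolding cycle_edges3 by simp
    then show False using assms(3,9,10) zc by (auto simp: doubleton_eq_iff)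
  qed
  have ne: "cycle_edges [a,b,c] \<noteq> cycle_edges [a,b,z]" using m1 m2 by blast
  have int: "{a,b} \<in> cycle_edges [a,b,c] \<inter> cycle_edges [a,b,z]"
    unfolding cycle_edges3 by simp
  have N: "\<forall>xs ys. is_cycle G xs \<and> is_cycle G ys \<and> length xs \<le> 8 \<and> length ys \<le> 8 \<and>
        cycle_edges xs \<noteq> cycle_edges ys \<longrightarrow> cycle_edges xs \<inter> cycle_edges ys = {}"
    using assms(2) unfolding no_adjacent_short_cycles_def .
  have "cycle_edges [a,b,c] \<inter> cycle_edges [a,b,z] = {}"
    using N[rule_format, of "[a,b,c]" "[a,b,z]"] c1 c2 ne by simp
  then show False using int by blast
qed

lemma extend_perm:
  fixes R :: "(nat \<times> nat) set"
  assumes "R \<subseteq> K \<times> K" "finite K"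
    "\<And>a b b'. (a,b)\<in>R \<Longrightarrow> (a,b')\<in>R \<Longrightarrow> b=b'"
    "\<And>a a' b. (a,b)\<in>R \<Longrightarrow> (a',b)\<in>R \<Longrightarrow> a=a'"
  shows "\<exists>f. bij_betw f K K \<and> (\<forall>a b. (a,b)\<in>R \<longrightarrow> f a = b)"
proof -
  have fR: "finite R" using assms(1,2) by (meson finite_SigmaI finite_subset)
  have i1: "inj_on fst R"
  proof (rule inj_onI)
    fix x y assume "x\<in>R" "y\<in>R" "fst x = fst y"
    then show "x = y" using assms(3)[of "fst x" "snd x" "snd y"] by (metis prod.collapse)
  qed
  have i2: "inj_on snd R"
  proof (rule inj_onI)
    fix x y assume "x\<in>R" "y\<in>R" "snd x = snd y"
    then show "x = y" using assms(4)[of "fst x" "snd x" "fst y"] by (metis prod.collapse)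
  qed
  have cA: "card (fst ` R) = card (snd ` R)" using card_image[OF i1] card_image[OF i2] by simp
  have sub1: "fst ` R \<subseteq> K" "snd ` R \<subseteq> K" using assms(1) by auto
  have fin: "finite (fst ` R)" "finite (snd ` R)" using fR by auto
  have "card (K - fst ` R) = card K - card (fst ` R)" using card_Diff_subset[OF fin(1) sub1(1)] .
  moreover have "card (K - snd ` R) = card K - card (snd ` R)" using card_Diff_subset[OF fin(2) sub1(2)] .
  ultimately have "card (K - fst ` R) = card (K - snd ` R)" using cA by simp
  then obtain g where g: "bij_betw g (K - fst ` R) (K - snd ` R)"
    using finite_same_card_bij[OF finite_Diff[OF assms(2)] finite_Diff[OF assms(2)]] by blast
  define r where "r a = (THE b. (a,b) \<in> R)" for a
  have r: "r a = b" if "(a,b)\<in>R" for a b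
    unfolding r_def using that assms(3) by blast
  have rR: "(a, r a) \<in> R" if "a \<in> fst ` R" for a
  proof -
    from that obtain b where "(a,b)\<in>R" by force
    then show ?thesis using r by simp
  qed
  define f where "f a = (if a \<in> fst ` R then r a else g a)" for a
  have "inj_on f (fst ` R)"
  proof (rule inj_onI)
    fix a1 a2 assume a: "a1 \<in> fst ` R" "a2 \<in> fst ` R" "f a1 = f a2"
    then have "r a1 = r a2" unfolding f_def by simp
    have "(a1, r a1) \<in> R" "(a2, r a2) \<in> R" using rR a(1,2) by blast+
    then have "(a1, r a1) \<in> R" "(a2, r a1) \<in> R" using \<open>r a1 = r a2\<close> by simp_all
    then show "a1 = a2" using assms(4) by blast
  qed
  moreover have "f ` fst ` R = snd ` R"
  proof
    show "f ` fst ` R \<subseteq> snd ` R"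
    proof
      fix y assume "y \<in> f ` fst ` R"
      then obtain a where a: "a \<in> fst ` R" "y = f a" by blast
      then have "(a, y) \<in> R" using rR unfolding f_def by simp
      then show "y \<in> snd ` R" by force
    qed
    show "snd ` R \<subseteq> f ` fst ` R"
    proof
      fix y assume "y \<in> snd ` R"
      then obtain a where a: "(a,y) \<in> R" by force
      then have "a \<in> fst ` R" by force
      moreover have "f a = y"
      proof -
        have "f a = r a" unfolding f_def using \<open>a \<in> fst ` R\<close> by simp
        also have "r a = y" by (rule r[OF a])
        finally show ?thesis .
      qed
      ultimately show "y \<in> f ` fst ` R" by blast
    qed
  qed
  ultimately have b1: "bij_betw f (fst ` R) (snd ` R)" unfolding bij_betw_def by blast
  have b2: "bij_betw f (K - fst ` R) (K - snd ` R)"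
  proof -
    have "bij_betw f (K - fst ` R) (K - snd ` R) = bij_betw g (K - fst ` R) (K - snd ` R)"
      by (rule bij_betw_cong) (simp add: f_def)
    then show ?thesis using g by simp
  qed
  have "bij_betw f (fst ` R \<union> (K - fst ` R)) (snd ` R \<union> (K - snd ` R))"
    by (rule bij_betw_combine[OF b1 b2]) blast
  moreover have "fst ` R \<union> (K - fst ` R) = K" "snd ` R \<union> (K - snd ` R) = K" using sub1 by auto
  ultimately have "bij_betw f K K" by simp
  moreover have "\<forall>a b. (a,b)\<in>R \<longrightarrow> f a = b"
  proof (intro allI impI)
    fix a b assume ab: "(a,b)\<in>R"
    then have "a \<in> fst ` R" by force
    then show "f a = b" using r[OF ab] unfolding f_def by simp
  qed
  ultimately show ?thesis by blast
qed


lemma comb: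
  fixes Xu Vu Xw Vw :: "nat set" and M :: "(nat \<times> nat) set"
  assumes s1: "\<And>p p'. p\<in>Xu \<Longrightarrow> p'\<in>Xu \<Longrightarrow> p=p'"
  and s2: "\<And>p p'. p\<in>Vu \<Longrightarrow> p'\<in>Vu \<Longrightarrow> p=p'"
  and s3: "\<And>p p'. p\<in>Xw \<Longrightarrow> p'\<in>Xw \<Longrightarrow> p=p'"
  and s4: "\<And>p p'. p\<in>Vw \<Longrightarrow> p'\<in>Vw \<Longrightarrow> p=p'"
  and m1: "\<And>p q q'. (p,q)\<in>M \<Longrightarrow> (p,q')\<in>M \<Longrightarrow> q=q'"
  and m2: "\<And>p p' q. (p,q)\<in>M \<Longrightarrow> (p',q)\<in>M \<Longrightarrow> p=p'"
  shows "(\<exists>p\<in>{1,2,3}. \<exists>q\<in>{1,2,3}. p\<notin>Xu \<and> p\<notin>Vu \<and> q\<notin>Xw \<and> q\<notin>Vw \<and> (p,q)\<notin>M) \<or>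
         (\<exists>p q. (p,q)\<in>M \<and> Vu\<noteq>{} \<and> Vw\<noteq>{} \<and> (\<forall>r\<in>{1,2,3}. r\<notin>Xu \<longrightarrow> r\<notin>Vu \<longrightarrow> r = p) \<and>
                (\<forall>r\<in>{1,2,3}. r\<notin>Xw \<longrightarrow> r\<notin>Vw \<longrightarrow> r = q))"
proof (cases "\<exists>p\<in>{1,2,3}. \<exists>q\<in>{1,2,3}. p\<notin>Xu \<and> p\<notin>Vu \<and> q\<notin>Xw \<and> q\<notin>Vw \<and> (p,q)\<notin>M")
  case True then show ?thesis by (rule disjI1)
next
  case False note H = this
  have pig: "\<exists>p\<in>{1,2,3::nat}. p\<notin>X \<and> p\<notin>V"
    if "\<And>p p'. p\<in>X \<Longrightarrow> p'\<in>X \<Longrightarrow> p=p'" "\<And>p p'. p\<in>V \<Longrightarrow> p'\<in>V \<Longrightarrow> p=p'" for X V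
  proof (rule ccontr)
    assume "\<not> ?thesis"
    then have h1: "1\<in>X \<or> 1\<in>V" "2\<in>X \<or> 2\<in>V" "3\<in>X \<or> 3\<in>V" by auto
    show False using h1 that(1)[of 1 2] that(1)[of 1 3] that(1)[of 2 3]
      that(2)[of 1 2] that(2)[of 1 3] that(2)[of 2 3] by auto
  qed
  obtain p where p: "p\<in>{1,2,3}" "p\<notin>Xu" "p\<notin>Vu" using pig[OF s1 s2] by blast
  obtain q where q: "q\<in>{1,2,3}" "q\<notin>Xw" "q\<notin>Vw" using pig[OF s3 s4] by blast
  have pq: "(p,q)\<in>M" using H p q by blast
  have U: "\<forall>r\<in>{1,2,3}. r\<notin>Xu \<longrightarrow> r\<notin>Vu \<longrightarrow> r = p"
  proof (intro ballI impI)
    fix r assume r: "r\<in>{1,2,3}" "r\<notin>Xu" "r\<notin>Vu"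
    have "(r,q)\<in>M" using H r q by blast
    then show "r = p" using pq m2 by blast
  qed
  have W: "\<forall>r\<in>{1,2,3}. r\<notin>Xw \<longrightarrow> r\<notin>Vw \<longrightarrow> r = q"
  proof (intro ballI impI)
    fix r assume r: "r\<in>{1,2,3}" "r\<notin>Xw" "r\<notin>Vw"
    have "(p,r)\<in>M" using H r p by blast
    then show "r = q" using pq m1 by blast
  qed
  have "Vu \<noteq> {}"
  proof
    assume "Vu = {}"
    then have "\<forall>r\<in>{1,2,3}. r \<noteq> p \<longrightarrow> r \<in> Xu" using U by blast
    then show False using p(1) s1[of 2 3] s1[of 1 3] s1[of 1 2] by auto
  qed
  moreover have "Vw \<noteq> {}"
  proof
    assume "Vw = {}"
    then have "\<forall>r\<in>{1,2,3}. r \<noteq> q \<longrightarrow> r \<in> Xw" using W by blast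
    then show False using q(1) s3[of 2 3] s3[of 1 3] s3[of 1 2] by auto
  qed
  ultimately have "\<exists>p q. (p,q)\<in>M \<and> Vu\<noteq>{} \<and> Vw\<noteq>{} \<and> (\<forall>r\<in>{1,2,3}. r\<notin>Xu \<longrightarrow> r\<notin>Vu \<longrightarrow> r = p) \<and>
                (\<forall>r\<in>{1,2,3}. r\<notin>Xw \<longrightarrow> r\<notin>Vw \<longrightarrow> r = q)" using pq U W by blast
  then show ?thesis by (rule disjI2)
qed




locale tri =
  fixes G :: pgraph and S :: "nat set" and C :: "nat \<Rightarrow> nat \<Rightarrow> (nat \<times> nat) set"
    and phi0 :: "nat \<Rightarrow> nat" and u v w :: nat and \<alpha> \<beta> :: "nat \<Rightarrow> nat"
  assumes cex: "counterexample G S C phi0"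
  and dist: "distinct [u,v,w]"
  and euv: "{u,v} \<in> pE G" and evw: "{v,w} \<in> pE G" and ewu: "{w,u} \<in> pE G"
  and uS: "u \<notin> S" and wS: "w \<notin> S"
  and \<alpha>: "bij_betw \<alpha> {1,2,3} {1,2,3}" and \<beta>: "bij_betw \<beta> {1,2,3} {1,2,3}"
  and A: "\<And>p b q. (p,b)\<in>C u v \<Longrightarrow> (b,q)\<in>C v w \<Longrightarrow> \<alpha> p = b \<and> \<beta> b = q"
  and Cc: "\<And>p q. (p,q)\<in>C u w \<Longrightarrow> \<beta> (\<alpha> p) = q"
  and xu: "\<And>z z'. {u,z}\<in>pE G \<Longrightarrow> z\<notin>{v,w} \<Longrightarrow> {u,z'}\<in>pE G \<Longrightarrow> z'\<notin>{v,w} \<Longrightarrow> z = z'"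
  and yw: "\<And>z z'. {w,z}\<in>pE G \<Longrightarrow> z\<notin>{u,v} \<Longrightarrow> {w,z'}\<in>pE G \<Longrightarrow> z'\<notin>{u,v} \<Longrightarrow> z = z'"
begin

definition h :: "nat \<Rightarrow> nat \<Rightarrow> nat" where
  "h a = (if a = u then \<beta> \<circ> \<alpha> else if a = v then \<beta> else id)"

definition C' :: "nat \<Rightarrow> nat \<Rightarrow> (nat \<times> nat) set" where
  "C' a b = (if a \<in> {u,v,w} \<and> b \<in> {u,v,w} \<and> a \<noteq> b
     then {(i,j). i\<in>{1,2,3} \<and> j\<in>{1,2,3} \<and> h a i = h b j} else C a b)"

lemma C'_T: "a \<in> {u,v,w} \<Longrightarrow> b \<in> {u,v,w} \<Longrightarrow> a \<noteq> b \<Longrightarrow>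
   C' a b = {(i,j). i\<in>{1,2,3} \<and> j\<in>{1,2,3} \<and> h a i = h b j}"
  unfolding C'_def by simp

lemma C'_nT: "\<not> (a \<in> {u,v,w} \<and> b \<in> {u,v,w} \<and> a \<noteq> b) \<Longrightarrow> C' a b = C a b"
  unfolding C'_def by (rule if_not_P)

lemma pg: "plane_graph G" and nac: "no_adjacent_short_cycles G"
  and c3: "corr3 G C" and cons: "\<forall>ws. closed_walk G ws \<and> length ws = 4 \<longrightarrow> \<not> inconsistent_on C ws"
  and col0: "C_coloring G C S phi0"
  and noext: "\<not> (\<exists>phi. C_coloring G C (pV G) phi \<and> (\<forall>v\<in>S. phi v = phi0 v))"
  using cex unfolding counterexample_def by blast+

lemma h_bij: "a \<in> {u,v,w} \<Longrightarrow> bij_betw (h a) {1,2,3} {1,2,3}"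
  unfolding h_def using bij_betw_trans[OF \<alpha> \<beta>] \<beta> bij_betw_id[of "{1,2,3}"] by simp

lemma h_inj: "a \<in> {u,v,w} \<Longrightarrow> i\<in>{1,2,3} \<Longrightarrow> j\<in>{1,2,3} \<Longrightarrow> h a i = h a j \<Longrightarrow> i = j"
proof -
  assume a: "a \<in> {u,v,w}" "i\<in>{1,2,3}" "j\<in>{1,2,3}" "h a i = h a j"
  have "inj_on (h a) {1,2,3}" using h_bij[OF a(1)] unfolding bij_betw_def by (rule conjunct1)
  then show "i = j" using a(2-4) unfolding inj_on_def by blast
qed

lemma h_surj: "a \<in> {u,v,w} \<Longrightarrow> k\<in>{1,2,3} \<Longrightarrow> \<exists>i\<in>{1,2,3}. h a i = k"
proof -
  assume a: "a \<in> {u,v,w}" "k\<in>{1,2,3}"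
  then have "k \<in> h a ` {1,2,3}" using h_bij[OF a(1)] unfolding bij_betw_def by simp
  then show ?thesis by blast
qed

lemma edges_T: "a \<in> {u,v,w} \<Longrightarrow> b \<in> {u,v,w} \<Longrightarrow> a \<noteq> b \<Longrightarrow> {a,b} \<in> pE G"
proof -
  assume a: "a \<in> {u,v,w}" "b \<in> {u,v,w}" "a \<noteq> b"
  have e: "{v,u} \<in> pE G" "{w,v} \<in> pE G" "{u,w} \<in> pE G"
    using euv evw ewu by (simp_all add: insert_commute)
  from a(1,2) show ?thesis
    by (elim insertE emptyE) (use a(3) euv evw ewu e in simp_all)
qed

lemma C3: "{a,b} \<in> pE G \<Longrightarrow> C a b \<subseteq> {1,2,3} \<times> {1,2,3} \<and> C b a = converse (C a b) \<and>
        (\<forall>x y y'. (x, y) \<in> C a b \<and> (x, y') \<in> C a b \<longrightarrow> y = y') \<and>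
        (\<forall>x x' y. (x, y) \<in> C a b \<and> (x', y) \<in> C a b \<longrightarrow> x = x')"
proof -
  assume e: "{a,b} \<in> pE G"
  have "\<forall>u v. {u, v} \<in> pE G \<longrightarrow>
        C u v \<subseteq> {1,2,3} \<times> {1,2,3} \<and> C v u = converse (C u v) \<and>
        (\<forall>a b b'. (a, b) \<in> C u v \<and> (a, b') \<in> C u v \<longrightarrow> b = b') \<and>
        (\<forall>a a' b. (a, b) \<in> C u v \<and> (a', b) \<in> C u v \<longrightarrow> a = a')"
    using c3 unfolding corr3_def by (rule conjunct1)
  from this[rule_format, OF e] show ?thesis .
qed

lemma C3sub: "{a,b} \<in> pE G \<Longrightarrow> C a b \<subseteq> {1,2,3} \<times> {1,2,3}" by (rule conjunct1[OF C3])
lemma C3conv: "{a,b} \<in> pE G \<Longrightarrow> C b a = converse (C a b)" by (rule conjunct1[OF conjunct2[OF C3]])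
lemma C3fun: assumes "{a,b} \<in> pE G" "(x, y) \<in> C a b" "(x, y') \<in> C a b" shows "y = y'"
  using conjunct1[OF conjunct2[OF conjunct2[OF C3[OF assms(1)]]], rule_format, OF conjI[OF assms(2,3)]] .
lemma C3inj: assumes "{a,b} \<in> pE G" "(x, y) \<in> C a b" "(x', y) \<in> C a b" shows "x = x'"
  using conjunct2[OF conjunct2[OF conjunct2[OF C3[OF assms(1)]]], rule_format, OF conjI[OF assms(2,3)]] .
lemma C3ne: "{a,b} \<notin> pE G \<Longrightarrow> C a b = {}"
proof -
  assume e: "{a,b} \<notin> pE G"
  have "\<forall>u v. {u, v} \<notin> pE G \<longrightarrow> C u v = {}" using c3 unfolding corr3_def by (rule conjunct2)
  from this[rule_format, OF e] show ?thesis .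
qed

lemma corr3': "corr3 G C'"
  unfolding corr3_def
proof (rule conjI; intro allI impI)
  fix a b assume e: "{a,b} \<in> pE G"
  have p1: "C' a b \<subseteq> {1,2,3} \<times> {1,2,3}"
  proof (cases "a \<in> {u,v,w} \<and> b \<in> {u,v,w} \<and> a \<noteq> b")
    case True then show ?thesis by (subst C'_T) auto
  next
    case False then show ?thesis using C3sub[OF e] C'_nT by simp
  qed
  have p2: "C' b a = converse (C' a b)"
  proof (cases "a \<in> {u,v,w} \<and> b \<in> {u,v,w} \<and> a \<noteq> b")
    case True then show ?thesis using C'_T[of a b] C'_T[of b a] by auto
  next
    case False then show ?thesis using C3conv[OF e] C'_nT[of a b] C'_nT[of b a] by auto
  qed
  have p3: "\<forall>x y y'. (x, y) \<in> C' a b \<and> (x, y') \<in> C' a b \<longrightarrow> y = y'"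
  proof (cases "a \<in> {u,v,w} \<and> b \<in> {u,v,w} \<and> a \<noteq> b")
    case True
    show ?thesis
    proof (intro allI impI)
      fix x y y' assume "(x, y) \<in> C' a b \<and> (x, y') \<in> C' a b"
      then have "y\<in>{1,2,3}" "y'\<in>{1,2,3}" "h b y = h b y'" using C'_T[OF True[THEN conjunct1] True[THEN conjunct2, THEN conjunct1] True[THEN conjunct2, THEN conjunct2]] by auto
      then show "y = y'" using h_inj[of b] True by blast
    qed
  next
    case False then show ?thesis using C3fun[OF e] C'_nT[of a b] by metis
  qed
  have p4: "\<forall>x x' y. (x, y) \<in> C' a b \<and> (x', y) \<in> C' a b \<longrightarrow> x = x'"
  proof (cases "a \<in> {u,v,w} \<and> b \<in> {u,v,w} \<and> a \<noteq> b")
    case True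
    show ?thesis
    proof (intro allI impI)
      fix x x' y assume "(x, y) \<in> C' a b \<and> (x', y) \<in> C' a b"
      then have "x\<in>{1,2,3}" "x'\<in>{1,2,3}" "h a x = h a x'" using C'_T[OF True[THEN conjunct1] True[THEN conjunct2, THEN conjunct1] True[THEN conjunct2, THEN conjunct2]] by auto
      then show "x = x'" using h_inj[of a] True by blast
    qed
  next
    case False then show ?thesis using C3inj[OF e] C'_nT[of a b] by metis
  qed
  show "C' a b \<subseteq> {1,2,3} \<times> {1,2,3} \<and> C' b a = converse (C' a b) \<and>
        (\<forall>x y y'. (x, y) \<in> C' a b \<and> (x, y') \<in> C' a b \<longrightarrow> y = y') \<and>
        (\<forall>x x' y. (x, y) \<in> C' a b \<and> (x', y) \<in> C' a b \<longrightarrow> x = x')"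
    by (rule conjI[OF p1 conjI[OF p2 conjI[OF p3 p4]]])
next
  fix a b assume e: "{a,b} \<notin> pE G"
  then have "\<not> (a \<in> {u,v,w} \<and> b \<in> {u,v,w} \<and> a \<noteq> b)" using edges_T by blast
  then show "C' a b = {}" using C3ne[OF e] C'_nT by simp
qed


lemma all3s: "(\<forall>i<Suc (Suc (Suc 0)). P i) = (P 0 \<and> P (Suc 0) \<and> P (Suc (Suc 0)))"
  by (auto simp: less_Suc_eq)

lemma tri_closed:
  assumes a: "a \<in> {u,v,w}" and b: "b \<in> {u,v,w}" and ab: "a \<noteq> b"
    and ea: "{a,z} \<in> pE G" and eb: "{b,z} \<in> pE G"
  shows "z \<in> {u,v,w}"
proof -
  have za: "z \<noteq> a" using edge_ends[OF pg ea] by simp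
  have zb: "z \<noteq> b" using edge_ends[OF pg eb] by simp
  have "\<exists>r\<in>{u,v,w}. r \<noteq> a \<and> r \<noteq> b" using dist a b by auto
  then obtain r where r: "r \<in> {u,v,w}" "r \<noteq> a" "r \<noteq> b" by blast
  have d: "distinct [a,b,r]" using ab r by simp
  have "z = r"
  proof (rule third_vertex[OF pg nac d])
    show "{a,b} \<in> pE G" by (rule edges_T[OF a b ab])
    show "{b,r} \<in> pE G" using edges_T[OF b r(1)] r(3) by simp
    show "{r,a} \<in> pE G" using edges_T[OF r(1) a] r(2) by simp
    show "{b,z} \<in> pE G" by (rule eb)
    show "{z,a} \<in> pE G" using ea by (simp add: insert_commute)
    show "z \<noteq> a" by (rule za)
    show "z \<noteq> b" by (rule zb)
  qed
  then show ?thesis using r(1) by simp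
qed

lemma cons': "\<forall>ws. closed_walk G ws \<and> length ws = 4 \<longrightarrow> \<not> inconsistent_on C' ws"
proof (intro allI impI notI)
  fix ws assume H: "closed_walk G ws \<and> length ws = 4" and I: "inconsistent_on C' ws"
  have "\<exists>a0 a1 a2 a3. ws = [a0,a1,a2,a3]" using H by (auto simp: length_Suc_conv eval_nat_numeral)
  then obtain a0 a1 a2 a3 where ws: "ws = [a0,a1,a2,a3]" by blast
  have cw: "hd ws = last ws" "\<forall>i < length ws - 1. {ws ! i, ws ! (i + 1)} \<in> pE G"
    using H unfolding closed_walk_def by blast+
  have a3: "a3 = a0" using cw(1) ws by simp
  have e: "{a0,a1} \<in> pE G" "{a1,a2} \<in> pE G" "{a2,a0} \<in> pE G"
    using cw(2) unfolding ws by (simp_all add: all3s a3)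
  from I obtain cs where cs: "length cs = length ws"
    "\<forall>i < length ws - 1. (cs ! i, cs ! (i + 1)) \<in> C' (ws ! i) (ws ! (i + 1))" "hd cs \<noteq> last cs"
    unfolding inconsistent_on_def by blast
  have "\<exists>c0 c1 c2 c3. cs = [c0,c1,c2,c3]" using cs(1) ws by (auto simp: length_Suc_conv)
  then obtain c0 c1 c2 c3 where csd: "cs = [c0,c1,c2,c3]" by blast
  have st: "(c0,c1) \<in> C' a0 a1" "(c1,c2) \<in> C' a1 a2" "(c2,c3) \<in> C' a2 a0"
    using cs(2) unfolding ws csd by (simp_all add: all3s a3)
  have c03: "c0 \<noteq> c3" using cs(3) csd by simp
  have d: "a0 \<noteq> a1" "a1 \<noteq> a2" "a2 \<noteq> a0"
    using edge_ends[OF pg e(1)] edge_ends[OF pg e(2)] edge_ends[OF pg e(3)] by simp_all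
  show False
  proof (cases "a0 \<in> {u,v,w} \<and> a1 \<in> {u,v,w} \<and> a2 \<in> {u,v,w}")
    case True
    then have T: "a0 \<in> {u,v,w}" "a1 \<in> {u,v,w}" "a2 \<in> {u,v,w}" by simp_all
    have "c0 \<in> {1,2,3} \<and> c1 \<in> {1,2,3} \<and> h a0 c0 = h a1 c1" using st(1) C'_T[OF T(1) T(2) d(1)] by simp
    moreover have "c2 \<in> {1,2,3} \<and> h a1 c1 = h a2 c2" using st(2) C'_T[OF T(2) T(3) d(2)] by simp
    moreover have "c3 \<in> {1,2,3} \<and> h a2 c2 = h a0 c3" using st(3) C'_T[OF T(3) T(1) d(3)] by simp
    ultimately have "c0 \<in> {1,2,3}" "c3 \<in> {1,2,3}" "h a0 c0 = h a0 c3" by simp_all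
    then have "c0 = c3" using h_inj[OF T(1)] by blast
    then show False using c03 by simp
  next
    case False
    have n1: "\<not> (a0 \<in> {u,v,w} \<and> a1 \<in> {u,v,w} \<and> a0 \<noteq> a1)"
    proof
      assume "a0 \<in> {u,v,w} \<and> a1 \<in> {u,v,w} \<and> a0 \<noteq> a1"
      moreover have "a2 \<in> {u,v,w}" if "a0 \<in> {u,v,w}" "a1 \<in> {u,v,w}" "a0 \<noteq> a1"
        using tri_closed[OF that] e(2) e(3) by (simp add: insert_commute)
      ultimately show False using False by blast
    qed
    have n2: "\<not> (a1 \<in> {u,v,w} \<and> a2 \<in> {u,v,w} \<and> a1 \<noteq> a2)"
    proof
      assume "a1 \<in> {u,v,w} \<and> a2 \<in> {u,v,w} \<and> a1 \<noteq> a2"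
      moreover have "a0 \<in> {u,v,w}" if "a1 \<in> {u,v,w}" "a2 \<in> {u,v,w}" "a1 \<noteq> a2"
        using tri_closed[OF that] e(1) e(3) by (simp add: insert_commute)
      ultimately show False using False by blast
    qed
    have n3: "\<not> (a2 \<in> {u,v,w} \<and> a0 \<in> {u,v,w} \<and> a2 \<noteq> a0)"
    proof
      assume "a2 \<in> {u,v,w} \<and> a0 \<in> {u,v,w} \<and> a2 \<noteq> a0"
      moreover have "a1 \<in> {u,v,w}" if "a2 \<in> {u,v,w}" "a0 \<in> {u,v,w}" "a2 \<noteq> a0"
        using tri_closed[OF that] e(1) e(2) by (simp add: insert_commute)
      ultimately show False using False by blast
    qed
    have st': "(c0,c1) \<in> C a0 a1" "(c1,c2) \<in> C a1 a2" "(c2,c3) \<in> C a2 a0"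
      using st C'_nT[OF n1] C'_nT[OF n2] C'_nT[OF n3] by simp_all
    have "inconsistent_on C ws"
      unfolding inconsistent_on_def
    proof (intro exI[of _ cs] conjI)
      show "length cs = length ws" by (rule cs(1))
      show "\<forall>i < length ws - 1. (cs ! i, cs ! (i + 1)) \<in> C (ws ! i) (ws ! (i + 1))"
        unfolding ws csd using st' by (simp add: all3s a3)
      show "hd cs \<noteq> last cs" by (rule cs(3))
    qed
    then show False using cons H by blast
  qed
qed


lemma hu: "h u = \<beta> \<circ> \<alpha>" unfolding h_def by simp
lemma hv: "h v = \<beta>" using dist unfolding h_def by simp
lemma hw: "h w = id" using dist unfolding h_def by simp

lemma uvw_V: "u \<in> pV G" "v \<in> pV G" "w \<in> pV G"
  using edge_ends[OF pg euv] edge_ends[OF pg evw] by simp_all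

lemma col': "C_coloring G C' S phi0"
proof -
  have a: "\<forall>x\<in>S. phi0 x \<in> {1,2,3}" and b: "\<forall>x\<in>S. \<forall>y\<in>S. {x,y} \<in> pE G \<longrightarrow> (phi0 x, phi0 y) \<notin> C x y"
    using col0 unfolding C_coloring_def by blast+
  have "\<forall>x\<in>S. \<forall>y\<in>S. {x,y} \<in> pE G \<longrightarrow> (phi0 x, phi0 y) \<notin> C' x y"
  proof (intro ballI impI)
    fix x y assume xy: "x \<in> S" "y \<in> S" "{x,y} \<in> pE G"
    have "\<not> (x \<in> {u,v,w} \<and> y \<in> {u,v,w} \<and> x \<noteq> y)" using xy uS wS by auto
    then show "(phi0 x, phi0 y) \<notin> C' x y" using b xy C'_nT by simp
  qed
  then show ?thesis using a unfolding C_coloring_def by blast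
qed

lemma noext': "\<not> (\<exists>phi. C_coloring G C' (pV G) phi \<and> (\<forall>x\<in>S. phi x = phi0 x))"
proof
  assume "\<exists>phi. C_coloring G C' (pV G) phi \<and> (\<forall>x\<in>S. phi x = phi0 x)"
  then obtain \<phi> where col: "C_coloring G C' (pV G) \<phi>" and agr: "\<forall>x\<in>S. \<phi> x = phi0 x" by blast
  have cv: "\<And>a. a \<in> pV G \<Longrightarrow> \<phi> a \<in> {1,2,3}" using col unfolding C_coloring_def by blast
  have ce: "\<And>a b. a \<in> pV G \<Longrightarrow> b \<in> pV G \<Longrightarrow> {a,b} \<in> pE G \<Longrightarrow> (\<phi> a, \<phi> b) \<notin> C' a b"
    using col unfolding C_coloring_def by blast
  define Xu where "Xu = {p. \<exists>z. {u,z} \<in> pE G \<and> z \<notin> {v,w} \<and> (\<phi> z, p) \<in> C z u}"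
  define Vu where "Vu = {p. (\<phi> v, p) \<in> C v u}"
  define Xw where "Xw = {q. \<exists>z. {w,z} \<in> pE G \<and> z \<notin> {u,v} \<and> (\<phi> z, q) \<in> C z w}"
  define Vw where "Vw = {q. (\<phi> v, q) \<in> C v w}"
  have evu: "{v,u} \<in> pE G" and ewv: "{w,v} \<in> pE G" and euw: "{u,w} \<in> pE G"
    using euv evw ewu by (simp_all add: insert_commute)
  have s1: "p = p'" if A: "p \<in> Xu" "p' \<in> Xu" for p p'
  proof -
    obtain z where z: "{u,z} \<in> pE G" "z \<notin> {v,w}" "(\<phi> z, p) \<in> C z u" using A(1) Xu_def by blast
    obtain z' where z': "{u,z'} \<in> pE G" "z' \<notin> {v,w}" "(\<phi> z', p') \<in> C z' u" using A(2) Xu_def by blast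
    have "z = z'" by (rule xu[OF z(1,2) z'(1,2)])
    moreover have "{z,u} \<in> pE G" using z(1) by (simp add: insert_commute)
    ultimately show "p = p'" using C3fun z(3) z'(3) by blast
  qed
  have s3: "p = p'" if A: "p \<in> Xw" "p' \<in> Xw" for p p'
  proof -
    obtain z where z: "{w,z} \<in> pE G" "z \<notin> {u,v}" "(\<phi> z, p) \<in> C z w" using A(1) Xw_def by blast
    obtain z' where z': "{w,z'} \<in> pE G" "z' \<notin> {u,v}" "(\<phi> z', p') \<in> C z' w" using A(2) Xw_def by blast
    have "z = z'" by (rule yw[OF z(1,2) z'(1,2)])
    moreover have "{z,w} \<in> pE G" using z(1) by (simp add: insert_commute)
    ultimately show "p = p'" using C3fun z(3) z'(3) by blast
  qed
  have s2: "p = p'" if "p \<in> Vu" "p' \<in> Vu" for p p'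
    using that C3fun[OF evu] unfolding Vu_def by blast
  have s4: "p = p'" if "p \<in> Vw" "p' \<in> Vw" for p p'
    using that C3fun[OF evw] unfolding Vw_def by blast
  have m1: "q = q'" if "(p,q) \<in> C u w" "(p,q') \<in> C u w" for p q q'
    using C3fun[OF euw that] .
  have m2: "p = p'" if "(p,q) \<in> C u w" "(p',q) \<in> C u w" for p p' q
    using C3inj[OF euw that] .
  have notT: "\<not> (a \<in> {u,v,w} \<and> b \<in> {u,v,w} \<and> a \<noteq> b)" if "a \<notin> {u,w}" "b \<notin> {u,w}" for a b
    using that by auto
  have D: "(\<exists>p\<in>{1,2,3}. \<exists>q\<in>{1,2,3}. p\<notin>Xu \<and> p\<notin>Vu \<and> q\<notin>Xw \<and> q\<notin>Vw \<and> (p,q)\<notin>C u w) \<or>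
         (\<exists>p q. (p,q)\<in>C u w \<and> Vu\<noteq>{} \<and> Vw\<noteq>{} \<and> (\<forall>r\<in>{1,2,3}. r\<notin>Xu \<longrightarrow> r\<notin>Vu \<longrightarrow> r = p) \<and>
                (\<forall>r\<in>{1,2,3}. r\<notin>Xw \<longrightarrow> r\<notin>Vw \<longrightarrow> r = q))"
    by (rule comb) (erule (1) s1, erule (1) s2, erule (1) s3, erule (1) s4, erule (1) m1, erule (1) m2)
  from D show False
  proof (elim disjE exE conjE bexE)
    fix p q assume p: "p \<in> {1,2,3}" "p \<notin> Xu" "p \<notin> Vu" and q: "q \<in> {1,2,3}" "q \<notin> Xw" "q \<notin> Vw"
      and pq: "(p,q) \<notin> C u w"
    define \<psi> where "\<psi> = \<phi>(u := p, w := q)"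
    have \<psi>u: "\<psi> u = p" and \<psi>w: "\<psi> w = q" and \<psi>o: "\<And>x. x \<noteq> u \<Longrightarrow> x \<noteq> w \<Longrightarrow> \<psi> x = \<phi> x"
      unfolding \<psi>_def using dist by auto
    have Xu': "(\<phi> z, p) \<notin> C z u" if "{u,z} \<in> pE G" "z \<notin> {v,w}" for z
      using p(2) that unfolding Xu_def by blast
    have Xw': "(\<phi> z, q) \<notin> C z w" if "{w,z} \<in> pE G" "z \<notin> {u,v}" for z
      using q(2) that unfolding Xw_def by blast
    have Vu': "(\<phi> v, p) \<notin> C v u" using p(3) unfolding Vu_def by blast
    have Vw': "(\<phi> v, q) \<notin> C v w" using q(3) unfolding Vw_def by blast
    have edge_ok: "(\<psi> a, \<psi> b) \<notin> C a b" if ab: "a \<in> pV G" "b \<in> pV G" "{a,b} \<in> pE G" for a b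
    proof -
      have abd: "a \<noteq> b" using edge_ends[OF pg ab(3)] by simp
      have ba: "{b,a} \<in> pE G" using ab(3) by (simp add: insert_commute)
      have cv1: "C b a = converse (C a b)" by (rule C3conv[OF ab(3)])
      show ?thesis
      proof (cases "a = u")
        case au: True
        show ?thesis
        proof (cases "b = w")
          case True then show ?thesis using au pq \<psi>u \<psi>w by simp
        next
          case bw: False
          show ?thesis
          proof (cases "b = v")
            case True
            then have "(\<psi> a, \<psi> b) \<in> C a b \<Longrightarrow> (\<phi> v, p) \<in> C v u" using au cv1 \<psi>u \<psi>o dist by auto
            then show ?thesis using Vu' by blast
          next
            case False
            have "{u,b} \<in> pE G" using ab(3) au by simp
            then have "(\<phi> b, p) \<notin> C b u" using Xu' bw False by simp
            then show ?thesis using au cv1 \<psi>u \<psi>o[of b] bw abd by auto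
          qed
        qed
      next
        case au: False
        show ?thesis
        proof (cases "a = w")
          case aw: True
          show ?thesis
          proof (cases "b = u")
            case True
            then have "(\<psi> a, \<psi> b) \<in> C a b \<Longrightarrow> (p, q) \<in> C u w" using aw cv1 \<psi>u \<psi>w by auto
            then show ?thesis using pq by blast
          next
            case bu: False
            show ?thesis
            proof (cases "b = v")
              case True
              then have "(\<psi> a, \<psi> b) \<in> C a b \<Longrightarrow> (\<phi> v, q) \<in> C v w" using aw cv1 \<psi>w \<psi>o dist by auto
              then show ?thesis using Vw' by blast
            next
              case False
              have "{w,b} \<in> pE G" using ab(3) aw by simp
              then have "(\<phi> b, q) \<notin> C b w" using Xw' bu False by simp
              then show ?thesis using aw cv1 \<psi>w \<psi>o[of b] bu abd by auto
            qed
          qed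
        next
          case aw: False
          show ?thesis
          proof (cases "b = u")
            case bu: True
            show ?thesis
            proof (cases "a = v")
              case True then show ?thesis using Vu' bu \<psi>u \<psi>o dist by auto
            next
              case False
              have "{u,a} \<in> pE G" using ba bu by simp
              then have "(\<phi> a, p) \<notin> C a u" using Xu' aw False by simp
              then show ?thesis using bu \<psi>u \<psi>o[OF au aw] by simp
            qed
          next
            case bu: False
            show ?thesis
            proof (cases "b = w")
              case bw: True
              show ?thesis
              proof (cases "a = v")
                case True then show ?thesis using Vw' bw \<psi>w \<psi>o dist by auto
              next
                case False
                have "{w,a} \<in> pE G" using ba bw by simp
                then have "(\<phi> a, q) \<notin> C a w" using Xw' au False by simp
                then show ?thesis using bw \<psi>w \<psi>o[OF au aw] by simp
              qed
            next
              case bw: False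
              have "(\<phi> a, \<phi> b) \<notin> C' a b" by (rule ce[OF ab])
              moreover have "C' a b = C a b" using C'_nT notT[of a b] au aw bu bw by simp
              ultimately show ?thesis using \<psi>o[OF au aw] \<psi>o[OF bu bw] by simp
            qed
          qed
        qed
      qed
    qed
    have "C_coloring G C (pV G) \<psi>"
      unfolding C_coloring_def
    proof (intro conjI ballI impI)
      fix x assume "x \<in> pV G"
      then show "\<psi> x \<in> {1,2,3}" using cv p(1) q(1) unfolding \<psi>_def by simp
    next
      fix x y assume "x \<in> pV G" "y \<in> pV G" "{x,y} \<in> pE G"
      then show "(\<psi> x, \<psi> y) \<notin> C x y" by (rule edge_ok)
    qed
    moreover have "\<forall>x\<in>S. \<psi> x = phi0 x" using agr uS wS unfolding \<psi>_def by auto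
    ultimately show False using noext by blast
  next
    fix p q assume pq: "(p,q) \<in> C u w" and Vun: "Vu \<noteq> {}" and Vwn: "Vw \<noteq> {}"
      and Uu: "\<forall>r\<in>{1,2,3}. r \<notin> Xu \<longrightarrow> r \<notin> Vu \<longrightarrow> r = p"
      and Uw: "\<forall>r\<in>{1,2,3}. r \<notin> Xw \<longrightarrow> r \<notin> Vw \<longrightarrow> r = q"
    obtain p' where p': "p' \<in> Vu" using Vun by blast
    obtain q' where q': "q' \<in> Vw" using Vwn by blast
    have p'1: "(\<phi> v, p') \<in> C v u" using p' unfolding Vu_def by simp
    have q'1: "(\<phi> v, q') \<in> C v w" using q' unfolding Vw_def by simp
    have "C u v = converse (C v u)" by (rule C3conv[OF evu])
    then have p'2: "(p', \<phi> v) \<in> C u v" using p'1 by simp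
    have ab: "\<alpha> p' = \<phi> v" "\<beta> (\<phi> v) = q'" using A[OF p'2 q'1] by simp_all
    have bpq: "\<beta> (\<alpha> p) = q" by (rule Cc[OF pq])
    have p'K: "p' \<in> {1,2,3}" using p'1 C3sub[OF evu] by blast
    have q'K: "q' \<in> {1,2,3}" using q'1 C3sub[OF evw] by blast
    have pK: "p \<in> {1,2,3}" "q \<in> {1,2,3}" using pq C3sub[OF euw] by blast+
    have bK: "\<phi> v \<in> {1,2,3}" using cv uvw_V by simp
    have uK: "\<phi> u \<in> {1,2,3}" and wK: "\<phi> w \<in> {1,2,3}" using cv uvw_V by simp_all
    have uX: "\<phi> u \<notin> Xu"
    proof
      assume "\<phi> u \<in> Xu"
      then obtain z where z: "{u,z} \<in> pE G" "z \<notin> {v,w}" "(\<phi> z, \<phi> u) \<in> C z u" unfolding Xu_def by blast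
      have zu: "{z,u} \<in> pE G" using z(1) by (simp add: insert_commute)
      have "z \<noteq> u" using edge_ends[OF pg z(1)] by simp
      then have "C' z u = C z u" using C'_nT z(2) by simp
      moreover have "z \<in> pV G" using edge_ends[OF pg z(1)] by simp
      ultimately show False using ce[OF _ _ zu] z(3) uvw_V by simp
    qed
    have wX: "\<phi> w \<notin> Xw"
    proof
      assume "\<phi> w \<in> Xw"
      then obtain z where z: "{w,z} \<in> pE G" "z \<notin> {u,v}" "(\<phi> z, \<phi> w) \<in> C z w" unfolding Xw_def by blast
      have zw: "{z,w} \<in> pE G" using z(1) by (simp add: insert_commute)
      have "z \<noteq> w" using edge_ends[OF pg z(1)] by simp
      then have "C' z w = C z w" using C'_nT z(2) by simp
      moreover have "z \<in> pV G" using edge_ends[OF pg z(1)] by simp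
      ultimately show False using ce[OF _ _ zw] z(3) uvw_V by simp
    qed
    have Cvu: "C' v u = {(i,j). i\<in>{1,2,3} \<and> j\<in>{1,2,3} \<and> \<beta> i = \<beta> (\<alpha> j)}"
      using C'_T[of v u] dist by (simp add: hu hv)
    have Cvw: "C' v w = {(i,j). i\<in>{1,2,3} \<and> j\<in>{1,2,3} \<and> \<beta> i = j}"
      using C'_T[of v w] dist by (simp add: hv hw)
    have Cuw: "C' u w = {(i,j). i\<in>{1,2,3} \<and> j\<in>{1,2,3} \<and> \<beta> (\<alpha> i) = j}"
      using C'_T[of u w] dist by (simp add: hu hw)
    have uV: "\<phi> u \<notin> Vu"
    proof
      assume "\<phi> u \<in> Vu"
      then have "\<phi> u = p'" using s2 p' by blast
      then have "(\<phi> v, \<phi> u) \<in> C' v u" using Cvu bK p'K ab by simp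
      then show False using ce[OF _ _ evu] uvw_V by simp
    qed
    have wV: "\<phi> w \<notin> Vw"
    proof
      assume "\<phi> w \<in> Vw"
      then have "\<phi> w = q'" using s4 q' by blast
      then have "(\<phi> v, \<phi> w) \<in> C' v w" using Cvw bK q'K ab by simp
      then show False using ce[OF _ _ evw] uvw_V by simp
    qed
    have "\<phi> u = p" using Uu uK uX uV by blast
    moreover have "\<phi> w = q" using Uw wK wX wV by blast
    ultimately have "(\<phi> u, \<phi> w) \<in> C' u w" using Cuw pK bpq by simp
    then show False using ce[OF _ _ euw] uvw_V by simp
  qed
qed


lemma card_C_le: assumes e: "{a,b} \<in> pE G" shows "card (C a b) \<le> 3"
proof -
  have i: "inj_on fst (C a b)"
  proof (rule inj_onI)
    fix x y assume "x \<in> C a b" "y \<in> C a b" "fst x = fst y"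
    then show "x = y" using C3fun[OF e, of "fst x" "snd x" "snd y"] by (metis prod.collapse)
  qed
  have "fst ` C a b \<subseteq> {1,2,3}" using C3sub[OF e] by auto
  then have "card (fst ` C a b) \<le> card {1::nat,2,3}" by (rule card_mono[rotated]) simp
  then show ?thesis using card_image[OF i] by simp
qed

lemma card_C_lt: assumes e: "{a,b} \<in> pE G" and np: "\<not> perfect_matching3 (C a b)"
  shows "card (C a b) < 3"
proof -
  have i1: "inj_on fst (C a b)"
  proof (rule inj_onI)
    fix x y assume "x \<in> C a b" "y \<in> C a b" "fst x = fst y"
    then show "x = y" using C3fun[OF e, of "fst x" "snd x" "snd y"] by (metis prod.collapse)
  qed
  have i2: "inj_on snd (C a b)"
  proof (rule inj_onI)
    fix x y assume "x \<in> C a b" "y \<in> C a b" "snd x = snd y"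
    then show "x = y" using C3inj[OF e, of "fst x" "snd x" "fst y"] by (metis prod.collapse)
  qed
  have sub: "fst ` C a b \<subseteq> {1,2,3}" "snd ` C a b \<subseteq> {1,2,3}" using C3sub[OF e] by auto
  from np have "(\<exists>i\<in>{1,2,3}. \<forall>j. (i,j) \<notin> C a b) \<or> (\<exists>j\<in>{1,2,3}. \<forall>i. (i,j) \<notin> C a b)"
    unfolding perfect_matching3_def by blast
  then show ?thesis
  proof
    assume "\<exists>i\<in>{1,2,3}. \<forall>j. (i,j) \<notin> C a b"
    then obtain i where i: "i \<in> {1,2,3}" "\<forall>j. (i,j) \<notin> C a b" by blast
    have "fst ` C a b \<subseteq> {1,2,3} - {i}" using sub(1) i(2) by force
    then have "card (fst ` C a b) \<le> card ({1::nat,2,3} - {i})" by (rule card_mono[rotated]) simp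
    also have "\<dots> = 2" using i(1) by auto
    finally show ?thesis using card_image[OF i1] by simp
  next
    assume "\<exists>j\<in>{1,2,3}. \<forall>i. (i,j) \<notin> C a b"
    then obtain j where j: "j \<in> {1,2,3}" "\<forall>i. (i,j) \<notin> C a b" by blast
    have "snd ` C a b \<subseteq> {1,2,3} - {j}" using sub(2) j(2) by force
    then have "card (snd ` C a b) \<le> card ({1::nat,2,3} - {j})" by (rule card_mono[rotated]) simp
    also have "\<dots> = 2" using j(1) by auto
    finally show ?thesis using card_image[OF i2] by simp
  qed
qed

lemma card_C'_T: assumes a: "a \<in> {u,v,w}" and b: "b \<in> {u,v,w}" and ab: "a \<noteq> b"
  shows "card (C' a b) = 3"
proof -
  have eq: "C' a b = {(i,j). i\<in>{1,2,3} \<and> j\<in>{1,2,3} \<and> h a i = h b j}" by (rule C'_T[OF a b ab])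
  have i: "inj_on fst (C' a b)"
  proof (rule inj_onI)
    fix x y assume xy: "x \<in> C' a b" "y \<in> C' a b" "fst x = fst y"
    then have "snd x \<in> {1,2,3}" "snd y \<in> {1,2,3}" "h b (snd x) = h b (snd y)" unfolding eq by auto
    then have "snd x = snd y" using h_inj[OF b] by blast
    then show "x = y" using xy(3) by (simp add: prod_eq_iff)
  qed
  have "fst ` C' a b = {1,2,3}"
  proof
    show "fst ` C' a b \<subseteq> {1,2,3}" unfolding eq by auto
    show "{1,2,3} \<subseteq> fst ` C' a b"
    proof
      fix k :: nat assume k: "k \<in> {1,2,3}"
      have "h a k \<in> {1,2,3}" using h_bij[OF a] k unfolding bij_betw_def by blast
      then obtain j where j: "j \<in> {1,2,3}" "h b j = h a k" using h_surj[OF b] by blast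
      then have "(k,j) \<in> C' a b" unfolding eq using k by simp
      then show "k \<in> fst ` C' a b" by force
    qed
  qed
  then show ?thesis using card_image[OF i] by simp
qed

lemma weight: assumes x: "x \<in> {u,v,w}" and y: "y \<in> {u,v,w}" and xy: "x \<noteq> y"
  and np: "\<not> perfect_matching3 (C x y)"
  shows "corr_weight G C < corr_weight G C'"
proof -
  define P where "P = {(a, b). {a, b} \<in> pE G \<and> a < b}"
  have finV: "finite (pV G)" using pg unfolding plane_graph_def by (rule conjunct1)
  have "P \<subseteq> pV G \<times> pV G" unfolding P_def using edge_ends[OF pg] by auto
  then have finP: "finite P" using finV by (meson finite_SigmaI finite_subset)
  have le: "\<forall>p\<in>P. card (C (fst p) (snd p)) \<le> card (C' (fst p) (snd p))"
  proof
    fix p assume "p \<in> P"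
    then obtain a b where p: "p = (a,b)" "{a,b} \<in> pE G" "a < b" unfolding P_def by blast
    show "card (C (fst p) (snd p)) \<le> card (C' (fst p) (snd p))"
    proof (cases "a \<in> {u,v,w} \<and> b \<in> {u,v,w} \<and> a \<noteq> b")
      case True
      then show ?thesis using card_C'_T[of a b] card_C_le[OF p(2)] p(1) by simp
    next
      case False then show ?thesis using C'_nT p(1) by simp
    qed
  qed
  have ex: "\<exists>p\<in>P. card (C (fst p) (snd p)) < card (C' (fst p) (snd p))"
  proof -
    have exy: "{x,y} \<in> pE G" by (rule edges_T[OF x y xy])
    have lt: "card (C x y) < 3" by (rule card_C_lt[OF exy np])
    show ?thesis
    proof (cases "x < y")
      case True
      then have "(x,y) \<in> P" unfolding P_def using exy by simp
      moreover have "card (C' x y) = 3" by (rule card_C'_T[OF x y xy])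
      ultimately show ?thesis using lt by force
    next
      case False
      then have yx: "y < x" using xy by simp
      have eyx: "{y,x} \<in> pE G" using exy by (simp add: insert_commute)
      then have "(y,x) \<in> P" unfolding P_def using yx by simp
      moreover have "card (C' y x) = 3" by (rule card_C'_T[OF y x xy[symmetric]])
      moreover have "card (C y x) = card (C x y)" using C3conv[OF exy] by simp
      ultimately show ?thesis using lt by force
    qed
  qed
  have "(\<Sum>p\<in>P. card (C (fst p) (snd p))) < (\<Sum>p\<in>P. card (C' (fst p) (snd p)))"
    by (rule sum_strict_mono_ex1[OF finP le ex])
  then show ?thesis unfolding corr_weight_def P_def .
qed

lemma cex': "counterexample G S C' phi0"
proof -
  have "plane_graph G \<and> no_adjacent_short_cycles G \<and>
     S \<subseteq> pV G \<and> card S \<le> 12 \<and>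
     ((\<exists>v\<in>pV G. S = {v}) \<or> (\<exists>F. is_face G F \<and> S = face_vertices G F))"
    using cex unfolding counterexample_def by blast
  then show ?thesis unfolding counterexample_def using corr3' cons' col' noext' by blast
qed

end



lemma three_nb:
  assumes "card N = 3" "v \<in> N" "w \<in> N" "v \<noteq> w" "z \<in> N" "z' \<in> N" "z \<notin> {v,w}" "z' \<notin> {v,w}"
  shows "z = z'"
proof -
  have fin: "finite N" using assms(1) by (metis card.infinite zero_neq_numeral)
  have sub: "{v,w} \<subseteq> N" using assms(2,3) by simp
  have "card (N - {v,w}) = card N - card {v,w}" by (rule card_Diff_subset[OF _ sub]) simp
  also have "\<dots> = 1" using assms(1,4) by simp
  finally have "card (N - {v,w}) = 1" .
  then obtain t where t: "N - {v,w} = {t}" by (rule card_1_singletonE)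
  have "z \<in> N - {v,w}" "z' \<in> N - {v,w}" using assms(5-8) by simp_all
  then show ?thesis using t by simp
qed

lemma all3g: "(\<forall>i<Suc (Suc (Suc 0)). P i) = (P 0 \<and> P (Suc 0) \<and> P (Suc (Suc 0)))"
  by (auto simp: less_Suc_eq)

lemma tri_cons:
  assumes cons: "\<forall>ws. closed_walk G ws \<and> length ws = 4 \<longrightarrow> \<not> inconsistent_on C ws"
    and e: "{a,b} \<in> pE G" "{b,c} \<in> pE G" "{c,a} \<in> pE G"
    and s: "(x0,x1) \<in> C a b" "(x1,x2) \<in> C b c" "(x2,x3) \<in> C c a"
  shows "x0 = x3"
proof (rule ccontr)
  assume ne: "x0 \<noteq> x3"
  have cw: "closed_walk G [a,b,c,a]" unfolding closed_walk_def using e by (simp add: all3g)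
  have "inconsistent_on C [a,b,c,a]"
    unfolding inconsistent_on_def
  proof (intro exI[of _ "[x0,x1,x2,x3]"] conjI)
    show "length [x0,x1,x2,x3] = length [a,b,c,a]" by simp
    show "\<forall>i < length [a,b,c,a] - 1. ([x0,x1,x2,x3] ! i, [x0,x1,x2,x3] ! (i + 1)) \<in> C ([a,b,c,a] ! i) ([a,b,c,a] ! (i + 1))"
      using s by (simp add: all3g)
    show "hd [x0,x1,x2,x3] \<noteq> last [x0,x1,x2,x3]" using ne by simp
  qed
  then show False using cons cw by simp
qed

theorem mainTheorem6:
  fixes G :: pgraph and S :: "nat set" and C :: "nat \<Rightarrow> nat \<Rightarrow> (nat \<times> nat) set"
    and phi0 :: "nat \<Rightarrow> nat" and F :: "complex set" and u v w :: nat
  assumes "minimal_counterexample G S C phi0"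
    and "is_face G F"
    and "distinct [u, v, w]"
    and "face_vertices G F = {u, v, w}"
    and "face_edges G F = {{u, v}, {v, w}, {w, u}}"
    and "degree G u = 3" and "degree G w = 3"
    and "u \<notin> S" and "w \<notin> S"
  shows "\<forall>e\<in>face_edges G F. \<forall>x y. e = {x, y} \<longrightarrow> perfect_matching3 (C x y)"
proof (rule ccontr)
  assume "\<not> ?thesis"
  then obtain x y where xy: "{x,y} \<in> face_edges G F" "\<not> perfect_matching3 (C x y)" by blast
  have cex: "counterexample G S C phi0" using assms(1) unfolding minimal_counterexample_def by blast
  have minc: "\<forall>G' S' C' phi0'. counterexample G' S' C' phi0' \<longrightarrow>
        \<not> (card (pV G') < card (pV G) \<or>
           (card (pV G') = card (pV G) \<and>
             (excess_edges G' S' < excess_edges G S \<or>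
              (excess_edges G' S' = excess_edges G S \<and> corr_weight G' C' > corr_weight G C))))"
    using assms(1) unfolding minimal_counterexample_def by blast
  have pg: "plane_graph G" and nac: "no_adjacent_short_cycles G" and c3: "corr3 G C"
    and cons: "\<forall>ws. closed_walk G ws \<and> length ws = 4 \<longrightarrow> \<not> inconsistent_on C ws"
    using cex unfolding counterexample_def by blast+
  have fe: "face_edges G F \<subseteq> pE G" unfolding face_edges_def by blast
  have euv: "{u,v} \<in> pE G" and evw: "{v,w} \<in> pE G" and ewu: "{w,u} \<in> pE G"
    using fe assms(5) by auto
  have evu: "{v,u} \<in> pE G" and ewv: "{w,v} \<in> pE G" and euw: "{u,w} \<in> pE G"
    using euv evw ewu by (simp_all add: insert_commute)
  have dist: "distinct [u,v,w]" by (rule assms(3))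
  have xyT: "x \<in> {u,v,w}" "y \<in> {u,v,w}" using xy(1) assms(5) by (auto simp: doubleton_eq_iff)
  have xyd: "x \<noteq> y" using edge_ends[OF pg] xy(1) fe by blast
  have C3all: "\<forall>u v. {u, v} \<in> pE G \<longrightarrow>
        C u v \<subseteq> {1,2,3} \<times> {1,2,3} \<and> C v u = converse (C u v) \<and>
        (\<forall>a b b'. (a, b) \<in> C u v \<and> (a, b') \<in> C u v \<longrightarrow> b = b') \<and>
        (\<forall>a a' b. (a, b) \<in> C u v \<and> (a', b) \<in> C u v \<longrightarrow> a = a')"
    using c3 unfolding corr3_def by (rule conjunct1)
  have Csub: "C a b \<subseteq> {1,2,3} \<times> {1,2,3}" if "{a,b} \<in> pE G" for a b
    using C3all[rule_format, OF that] by (rule conjunct1)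
  have Cconv: "C b a = converse (C a b)" if "{a,b} \<in> pE G" for a b
    using C3all[rule_format, OF that] by (rule conjunct1[OF conjunct2])
  have Cfun: "y1 = y2" if "{a,b} \<in> pE G" "(x1,y1) \<in> C a b" "(x1,y2) \<in> C a b" for a b x1 y1 y2
    using conjunct1[OF conjunct2[OF conjunct2[OF C3all[rule_format, OF that(1)]]], rule_format, OF conjI[OF that(2,3)]] .
  have Cinj: "x1 = x2" if "{a,b} \<in> pE G" "(x1,y1) \<in> C a b" "(x2,y1) \<in> C a b" for a b x1 x2 y1
    using conjunct2[OF conjunct2[OF conjunct2[OF C3all[rule_format, OF that(1)]]], rule_format, OF conjI[OF that(2,3)]] .
  have CW1: "p = p2" if "(p,b) \<in> C u v" "(b,q) \<in> C v w" "(q,p2) \<in> C w u" for p b q p2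
    by (rule tri_cons[OF cons euv evw ewu that])
  have CW2: "q = q1" if "(q,p) \<in> C w u" "(p,b) \<in> C u v" "(b,q1) \<in> C v w" for q p b q1
    by (rule tri_cons[OF cons ewu euv evw that])
  have uwconv: "(q,p) \<in> C w u" if "(p,q) \<in> C u w" for p q
    using that Cconv[OF euw] by simp
  define R\<alpha> where "R\<alpha> = {(p,b). (p,b) \<in> C u v \<and> (\<exists>q. (b,q) \<in> C v w)}"
  have "\<exists>f. bij_betw f {1,2,3} {1,2,3} \<and> (\<forall>a b. (a,b)\<in>R\<alpha> \<longrightarrow> f a = b)"
  proof (rule extend_perm)
    show "R\<alpha> \<subseteq> {1,2,3} \<times> {1,2,3}" using Csub[OF euv] unfolding R\<alpha>_def by blast
    show "finite {1::nat,2,3}" by simp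
    show "b = b'" if "(a,b)\<in>R\<alpha>" "(a,b')\<in>R\<alpha>" for a b b'
      using that Cfun[OF euv, of a b b'] unfolding R\<alpha>_def by blast
    show "a = a'" if "(a,b)\<in>R\<alpha>" "(a',b)\<in>R\<alpha>" for a a' b
      using that Cinj[OF euv, of a b a'] unfolding R\<alpha>_def by blast
  qed
  then obtain \<alpha> where \<alpha>: "bij_betw \<alpha> {1,2,3} {1,2,3}" and \<alpha>R: "\<forall>a b. (a,b)\<in>R\<alpha> \<longrightarrow> \<alpha> a = b" by blast
  have \<alpha>inj: "p1 = p2" if "p1 \<in> {1,2,3}" "p2 \<in> {1,2,3}" "\<alpha> p1 = \<alpha> p2" for p1 p2
    using \<alpha> that unfolding bij_betw_def inj_on_def by blast
  have \<alpha>K: "\<alpha> p \<in> {1,2,3}" if "p \<in> {1,2,3}" for p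
    using \<alpha> that unfolding bij_betw_def by blast
  define R\<beta> where "R\<beta> = {(b,q). (b,q) \<in> C v w \<and> (\<exists>p. (p,b) \<in> C u v)} \<union> {(\<alpha> p, q) | p q. (p,q) \<in> C u w}"
  have "\<exists>f. bij_betw f {1,2,3} {1,2,3} \<and> (\<forall>a b. (a,b)\<in>R\<beta> \<longrightarrow> f a = b)"
  proof (rule extend_perm)
    show "R\<beta> \<subseteq> {1,2,3} \<times> {1,2,3}" using Csub[OF evw] Csub[OF euw] \<alpha>K unfolding R\<beta>_def by blast
    show "finite {1::nat,2,3}" by simp
    show "b1 = b2" if A: "(a,b1)\<in>R\<beta>" "(a,b2)\<in>R\<beta>" for a b1 b2
    proof -
      consider (c1) "(a,b1) \<in> C v w" "\<exists>p. (p,a) \<in> C u v" | (c2) p1 where "a = \<alpha> p1" "(p1,b1) \<in> C u w"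
        using A(1) unfolding R\<beta>_def by blast
      then show ?thesis
      proof cases
        case c1
        consider (d1) "(a,b2) \<in> C v w" | (d2) p2 where "a = \<alpha> p2" "(p2,b2) \<in> C u w"
          using A(2) unfolding R\<beta>_def by blast
        then show ?thesis
        proof cases
          case d1 then show ?thesis using Cfun[OF evw c1(1)] by blast
        next
          case d2
          obtain p' where p': "(p',a) \<in> C u v" using c1(2) by blast
          have "(p',a) \<in> R\<alpha>" unfolding R\<alpha>_def using p' c1(1) by blast
          then have "\<alpha> p' = a" using \<alpha>R by blast
          moreover have "p' \<in> {1,2,3}" "p2 \<in> {1,2,3}" using Csub[OF euv] p' Csub[OF euw] d2(2) by blast+
          ultimately have "p' = p2" using \<alpha>inj d2(1) by metis
          then show ?thesis using CW2[OF uwconv[OF d2(2)] _ c1(1)] p' by blast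
        qed
      next
        case c2
        consider (d1) "(a,b2) \<in> C v w" "\<exists>p. (p,a) \<in> C u v" | (d2) p2 where "a = \<alpha> p2" "(p2,b2) \<in> C u w"
          using A(2) unfolding R\<beta>_def by blast
        then show ?thesis
        proof cases
          case d1
          obtain p' where p': "(p',a) \<in> C u v" using d1(2) by blast
          have "(p',a) \<in> R\<alpha>" unfolding R\<alpha>_def using p' d1(1) by blast
          then have "\<alpha> p' = a" using \<alpha>R by blast
          moreover have "p' \<in> {1,2,3}" "p1 \<in> {1,2,3}" using Csub[OF euv] p' Csub[OF euw] c2(2) by blast+
          ultimately have "p' = p1" using \<alpha>inj c2(1) by metis
          then show ?thesis using CW2[OF uwconv[OF c2(2)] _ d1(1)] p' by blast
        next
          case d2
          have "p1 \<in> {1,2,3}" "p2 \<in> {1,2,3}" using Csub[OF euw] c2(2) d2(2) by blast+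
          then have "p1 = p2" using \<alpha>inj c2(1) d2(1) by metis
          then show ?thesis using Cfun[OF euw] c2(2) d2(2) by blast
        qed
      qed
    qed
    show "a1 = a2" if A: "(a1,b)\<in>R\<beta>" "(a2,b)\<in>R\<beta>" for a1 a2 b
    proof -
      have mixed: "b1 = \<alpha> p" if "(b1,b) \<in> C v w" "(p',b1) \<in> C u v" "(p,b) \<in> C u w" for b1 p p'
      proof -
        have "p' = p" by (rule CW1[OF that(2,1) uwconv[OF that(3)]])
        moreover have "(p',b1) \<in> R\<alpha>" unfolding R\<alpha>_def using that(1,2) by blast
        ultimately show ?thesis using \<alpha>R by blast
      qed
      consider (c1) "(a1,b) \<in> C v w" "\<exists>p. (p,a1) \<in> C u v" | (c2) p1 where "a1 = \<alpha> p1" "(p1,b) \<in> C u w"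
        using A(1) unfolding R\<beta>_def by blast
      then show ?thesis
      proof cases
        case c1
        consider (d1) "(a2,b) \<in> C v w" | (d2) p2 where "a2 = \<alpha> p2" "(p2,b) \<in> C u w"
          using A(2) unfolding R\<beta>_def by blast
        then show ?thesis
        proof cases
          case d1 then show ?thesis using Cinj[OF evw c1(1)] by blast
        next
          case d2 then show ?thesis using mixed[OF c1(1) _ d2(2)] c1(2) by blast
        qed
      next
        case c2
        consider (d1) "(a2,b) \<in> C v w" "\<exists>p. (p,a2) \<in> C u v" | (d2) p2 where "a2 = \<alpha> p2" "(p2,b) \<in> C u w"
          using A(2) unfolding R\<beta>_def by blast
        then show ?thesis
        proof cases
          case d1 then show ?thesis using mixed[OF d1(1) _ c2(2)] d1(2) c2(1) by blast
        next
          case d2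
          have "p1 = p2" using Cinj[OF euw] c2(2) d2(2) by blast
          then show ?thesis using c2(1) d2(1) by simp
        qed
      qed
    qed
  qed
  then obtain \<beta> where \<beta>: "bij_betw \<beta> {1,2,3} {1,2,3}" and \<beta>R: "\<forall>a b. (a,b)\<in>R\<beta> \<longrightarrow> \<beta> a = b" by blast
  have A: "\<alpha> p = b \<and> \<beta> b = q" if "(p,b)\<in>C u v" "(b,q)\<in>C v w" for p b q
  proof
    show "\<alpha> p = b" using \<alpha>R that unfolding R\<alpha>_def by blast
    show "\<beta> b = q" using \<beta>R that unfolding R\<beta>_def by blast
  qed
  have Cc: "\<beta> (\<alpha> p) = q" if "(p,q)\<in>C u w" for p q
    using \<beta>R that unfolding R\<beta>_def by blast
  have du: "card {z. {u,z} \<in> pE G} = 3" using assms(6) unfolding degree_def .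
  have dw: "card {z. {w,z} \<in> pE G} = 3" using assms(7) unfolding degree_def .
  have xu: "z = z'" if "{u,z}\<in>pE G" "z\<notin>{v,w}" "{u,z'}\<in>pE G" "z'\<notin>{v,w}" for z z'
    by (rule three_nb[OF du, of v w z z']) (use that euv euw dist in simp_all)
  have yw: "z = z'" if "{w,z}\<in>pE G" "z\<notin>{u,v}" "{w,z'}\<in>pE G" "z'\<notin>{u,v}" for z z'
    by (rule three_nb[OF dw, of u v z z']) (use that ewu ewv dist in simp_all)
  have TR: "tri G S C phi0 u v w \<alpha> \<beta>"
    by (rule tri.intro[OF cex dist euv evw ewu assms(8) assms(9) \<alpha> \<beta> A Cc xu yw])
  obtain C'' where c1: "counterexample G S C'' phi0" and c2: "corr_weight G C < corr_weight G C''"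
    using tri.cex'[OF TR] tri.weight[OF TR xyT(1) xyT(2) xyd xy(2)] by blast
  show False using minc c1 c2 by blast
qed


end
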